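(* For every homogeneous ideal $I^h\subset\mathbb{K}[S_M^h]$ and every graded sparse order $\prec_h$, there exists a finite sparse Gröbner basis of $I^h$ with respect to $\prec_h$.
   Context: Let $\mathbb{K}$ be a field of characteristic $0$, $M\subset\mathbb{R}^n$ a polytope with $0\in M$, $S_M\subset\mathbb{Z}^n$ the affine semigroup generated by $M\cap\mathbb{Z}^n$ and $S_M^h\subset\mathbb{Z}^{n+1}$ the one generated by $\{(s,1):s\in M\cap\mathbb{Z}^n\}$, both assumed pointed. $\mathbb{K}[S]$ is the semigroup algebra with monomials $X^s$, $X^sX^t=X^{s+t}$; $\mathbb{K}[S_M^h]$ is graded by $\deg X^{(s,d)}=d$ and "homogeneous" refers to this grading. $\chi:\mathbb{K}[S_M^h]\to\mathbb{K}[S_M]$, $X^{(s,d)}\mapsto X^s$. The affine degree $\delta^A(X^s)$ is the least $d$ with $(s,d)\in S_M^h$, extended to polynomials by the maximum over the support; the sparse degree of $f\in\mathbb{K}[S_M^h]$ is $\delta(f)=\delta^A(\chi(f))$. Given a monomial order $<_M$ on $\mathbb{K}[S_M]$, the sparse order is $X^s\prec X^r$ iff $\delta^A(X^s)<\delta^A(X^r)$, or equality and $X^s<_MX^r$; the associated graded sparse order on monomials of $\mathbb{K}[S_M^h]$ is $X^{(s,d)}\prec_hX^{(r,d')}$ iff $d<d'$, or $d=d'$ and $X^s\prec X^r$. Divisibility: $X^{(s,d_s)}\mid_\delta X^{(r,d_r)}$ if some monomial $X^{(t,d_t)}$ satisfies $X^{(s,d_s)}X^{(t,d_t)}=X^{(r,d_r)}$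 and $\delta(X^{(s,d_s)})+\delta(X^{(t,d_t)})=\delta(X^{(r,d_r)})$. A sparse Gröbner basis of $I^h$ w.r.t. $\prec_h$ is a subset of $I^h$ generating $I^h$ such that for every nonzero $f\in I^h$ some element $g$ of it satisfies $\mathrm{LM}_{\prec_h}(g)\mid_\delta\mathrm{LM}_{\prec_h}(f)$. *)

theory Defs
  imports "HOL-Analysis.Analysis" "HOL-Library.Poly_Mapping"
begin

inductive_set semigroup_gen :: "'a::monoid_add set \<Rightarrow> 'a set" for A where
  zero: "0 \<in> semigroup_gen A"
| gen_add: "a \<in> A \<Longrightarrow> s \<in> semigroup_gen A \<Longrightarrow> a + s \<in> semigroup_gen A"

definition pointed_semigroup :: "'a::ab_group_add set \<Rightarrow> bool" where
  "pointed_semigroup S \<longleftrightarrow> (\<forall>s. s \<in> S \<and> - s \<in> S \<longrightarrow> s = 0)"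

definition lattice_pts :: "(real^'n) set \<Rightarrow> (int^'n) set" where
  "lattice_pts M = {z. (\<chi> i. real_of_int (z $ i)) \<in> M}"

definition SM :: "(real^'n) set \<Rightarrow> (int^'n) set" where
  "SM M = semigroup_gen (lattice_pts M)"

definition SMh :: "(real^'n) set \<Rightarrow> ((int^'n) \<times> int) set" where
  "SMh M = semigroup_gen ((\<lambda>s. (s, 1)) ` lattice_pts M)"

definition salg :: "'a::monoid_add set \<Rightarrow> ('a \<Rightarrow>\<^sub>0 'k::comm_ring_1) set" where
  "salg S = {f. Poly_Mapping.keys f \<subseteq> S}"

definition is_ideal_in :: "('a::monoid_add \<Rightarrow>\<^sub>0 'k::comm_ring_1) set \<Rightarrow> ('a \<Rightarrow>\<^sub>0 'k) set \<Rightarrow> bool" where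
  "is_ideal_in R I \<longleftrightarrow> I \<subseteq> R \<and> 0 \<in> I \<and> (\<forall>f\<in>I. \<forall>g\<in>I. f + g \<in> I)
      \<and> (\<forall>h\<in>R. \<forall>f\<in>I. h * f \<in> I)"

definition ideal_gen_in :: "('a::monoid_add \<Rightarrow>\<^sub>0 'k::comm_ring_1) set \<Rightarrow> ('a \<Rightarrow>\<^sub>0 'k) set \<Rightarrow> ('a \<Rightarrow>\<^sub>0 'k) set" where
  "ideal_gen_in R G = \<Inter>{J. is_ideal_in R J \<and> G \<subseteq> J}"

definition hcomp :: "int \<Rightarrow> ('b \<times> int \<Rightarrow>\<^sub>0 'k::comm_ring_1) \<Rightarrow> ('b \<times> int \<Rightarrow>\<^sub>0 'k)" where
  "hcomp d f = (\<Sum>k\<in>{k\<in>Poly_Mapping.keys f. snd k = d}. Poly_Mapping.single k (Poly_Mapping.lookup f k))"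

definition homogeneous_ideal_in :: "('b::monoid_add \<times> int \<Rightarrow>\<^sub>0 'k::comm_ring_1) set \<Rightarrow> ('b \<times> int \<Rightarrow>\<^sub>0 'k) set \<Rightarrow> bool" where
  "homogeneous_ideal_in R I \<longleftrightarrow> is_ideal_in R I \<and> (\<forall>f\<in>I. \<forall>d. hcomp d f \<in> I)"

text \<open>A monomial order on K[S]: a strict total order on S, compatible with multiplication
  (i.e. translation in S), with 1 = X^0 the least monomial.\<close>
definition monomial_order_on :: "'a::monoid_add set \<Rightarrow> ('a \<Rightarrow> 'a \<Rightarrow> bool) \<Rightarrow> bool" where
  "monomial_order_on S lt \<longleftrightarrow>
     (\<forall>s\<in>S. \<not> lt s s)
   \<and> (\<forall>s\<in>S. \<forall>r\<in>S. \<forall>t\<in>S. lt s r \<longrightarrow> lt r t \<longrightarrow> lt s t)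
   \<and> (\<forall>s\<in>S. \<forall>r\<in>S. s \<noteq> r \<longrightarrow> lt s r \<or> lt r s)
   \<and> (\<forall>s\<in>S. \<forall>r\<in>S. \<forall>t\<in>S. lt s r \<longrightarrow> lt (s + t) (r + t))
   \<and> (\<forall>s\<in>S. s \<noteq> 0 \<longrightarrow> lt 0 s)"

definition adeg :: "(real^'n) set \<Rightarrow> int^'n \<Rightarrow> int" where
  "adeg M s = (LEAST d::int. (s, d) \<in> SMh M)"

definition sdeg_mon :: "(real^'n) set \<Rightarrow> (int^'n) \<times> int \<Rightarrow> int" where
  "sdeg_mon M m = adeg M (fst m)"

definition sparse_less :: "(real^'n) set \<Rightarrow> (int^'n \<Rightarrow> int^'n \<Rightarrow> bool) \<Rightarrow> int^'n \<Rightarrow> int^'n \<Rightarrow> bool" where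
  "sparse_less M lessM s r \<longleftrightarrow> adeg M s < adeg M r \<or> (adeg M s = adeg M r \<and> lessM s r)"

definition gsparse_less :: "(real^'n) set \<Rightarrow> (int^'n \<Rightarrow> int^'n \<Rightarrow> bool) \<Rightarrow> (int^'n) \<times> int \<Rightarrow> (int^'n) \<times> int \<Rightarrow> bool" where
  "gsparse_less M lessM a b \<longleftrightarrow> snd a < snd b \<or> (snd a = snd b \<and> sparse_less M lessM (fst a) (fst b))"

definition LM :: "('a \<Rightarrow> 'a \<Rightarrow> bool) \<Rightarrow> ('a \<Rightarrow>\<^sub>0 'k::zero) \<Rightarrow> 'a" where
  "LM lt f = (THE m. m \<in> Poly_Mapping.keys f \<and> (\<forall>m'\<in>Poly_Mapping.keys f. m' \<noteq> m \<longrightarrow> lt m' m))"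

definition sdvd :: "(real^'n) set \<Rightarrow> (int^'n) \<times> int \<Rightarrow> (int^'n) \<times> int \<Rightarrow> bool" where
  "sdvd M a b \<longleftrightarrow> (\<exists>t\<in>SMh M. a + t = b \<and> sdeg_mon M a + sdeg_mon M t = sdeg_mon M b)"

definition sparse_GB :: "(real^'n) set \<Rightarrow> (int^'n \<Rightarrow> int^'n \<Rightarrow> bool)
    \<Rightarrow> ((int^'n) \<times> int \<Rightarrow>\<^sub>0 'k::comm_ring_1) set \<Rightarrow> ((int^'n) \<times> int \<Rightarrow>\<^sub>0 'k) set \<Rightarrow> bool" where
  "sparse_GB M lessM I G \<longleftrightarrow> G \<subseteq> I \<and> ideal_gen_in (salg (SMh M)) G = I
     \<and> (\<forall>f\<in>I. f \<noteq> 0 \<longrightarrow> (\<exists>g\<in>G. g \<noteq> 0 \<and>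
          sdvd M (LM (gsparse_less M lessM) g) (LM (gsparse_less M lessM) f)))"

end

theory Submission
  imports Defs
begin

lemma lookup_single_mult:
  fixes g :: "'a::cancel_comm_monoid_add \<Rightarrow>\<^sub>0 'b::comm_semiring_1"
  shows "Poly_Mapping.lookup (Poly_Mapping.single t c * g) (t + x) = c * Poly_Mapping.lookup g x"
proof -
  have "Poly_Mapping.lookup (Poly_Mapping.single t c * g) (t + x)
      = (\<Sum>l. Poly_Mapping.lookup (Poly_Mapping.single t c) l * (\<Sum>q. Poly_Mapping.lookup g q when t + x = l + q))"
    by (rule lookup_mult)
  also have "\<dots> = (\<Sum>l. (c * (\<Sum>q. Poly_Mapping.lookup g q when t + x = l + q)) when t = l)"
    by (rule Sum_any.cong) (auto simp: lookup_single when_def)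
  also have "\<dots> = c * (\<Sum>q. Poly_Mapping.lookup g q when t + x = t + q)"
    by simp
  also have "(\<Sum>q. Poly_Mapping.lookup g q when t + x = t + q) = (\<Sum>q. Poly_Mapping.lookup g q when x = q)"
    by (rule Sum_any.cong) (simp add: when_def)
  also have "\<dots> = Poly_Mapping.lookup g x" by simp
  finally show ?thesis .
qed

lemma keys_single_mult:
  fixes g :: "'a::monoid_add \<Rightarrow>\<^sub>0 'b::semiring_0"
  shows "Poly_Mapping.keys (Poly_Mapping.single t c * g) \<subseteq> (\<lambda>m. t + m) ` Poly_Mapping.keys g"
  using keys_mult[of "Poly_Mapping.single t c" g] by (auto split: if_splits)

abbreviation Gh :: "(real^'n) set \<Rightarrow> ((int^'n) \<times> int) set" where
  "Gh M \<equiv> (\<lambda>s. (s, 1)) ` lattice_pts M"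

lemma SMh_add: "a \<in> SMh M \<Longrightarrow> b \<in> SMh M \<Longrightarrow> a + b \<in> SMh M"
  unfolding SMh_def
  by (induction a rule: semigroup_gen.induct) (auto simp: add.assoc intro: semigroup_gen.intros)

lemma SMh_snd: "x \<in> SMh M \<Longrightarrow> snd x \<ge> 0"
  unfolding SMh_def
  by (induction x rule: semigroup_gen.induct) auto

lemma SMh_fst: "x \<in> SMh M \<Longrightarrow> fst x \<in> SM M"
  unfolding SMh_def SM_def
  by (induction x rule: semigroup_gen.induct) (auto intro: semigroup_gen.intros)

lemma zero_lattice: fixes M :: "(real^'n) set" shows "0 \<in> M \<Longrightarrow> 0 \<in> lattice_pts M"
proof -
  have "(\<chi> i. real_of_int ((0::int^'n) $ i)) = 0" by (simp add: vec_eq_iff)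
  then show "0 \<in> M \<Longrightarrow> 0 \<in> lattice_pts M" unfolding lattice_pts_def by simp
qed

lemma SMh_zero_deg: "0 \<in> M \<Longrightarrow> (0, int n) \<in> SMh M"
proof (induction n)
  case 0 then show ?case by (simp add: SMh_def zero_prod_def[symmetric] semigroup_gen.zero)
next
  case (Suc n)
  have "(0::int^'a, 1::int) \<in> Gh M" using zero_lattice[OF Suc.prems] by blast
  then have "(0::int^'a, 1::int) + (0, int n) \<in> SMh M"
    using Suc unfolding SMh_def by (blast intro: semigroup_gen.gen_add)
  then show ?case by simp
qed

lemma SMh_zero_deg': "0 \<in> M \<Longrightarrow> e \<ge> 0 \<Longrightarrow> (0, e) \<in> SMh M"
  using SMh_zero_deg[of M "nat e"] by simp

lemma adeg_props:
  assumes "(s, d) \<in> SMh M"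
  shows "adeg M s \<le> d" "(s, adeg M s) \<in> SMh M"
proof -
  have ex: "\<exists>n::nat. (s, int n) \<in> SMh M"
    using assms SMh_snd[OF assms] by (intro exI[of _ "nat d"]) simp
  define n0 where "n0 = (LEAST n::nat. (s, int n) \<in> SMh M)"
  have n0: "(s, int n0) \<in> SMh M" unfolding n0_def using ex by (metis LeastI_ex)
  have min: "\<And>n. (s, int n) \<in> SMh M \<Longrightarrow> n0 \<le> n" unfolding n0_def by (rule Least_le)
  have "adeg M s = int n0"
    unfolding adeg_def
  proof (rule Least_equality)
    show "(s, int n0) \<in> SMh M" by (rule n0)
    fix y assume y: "(s, y) \<in> SMh M"
    then have "y \<ge> 0" using SMh_snd by fastforce
    with y min[of "nat y"] show "int n0 \<le> y" by simp
  qed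
  then show "adeg M s \<le> d" "(s, adeg M s) \<in> SMh M"
    using n0 min[of "nat d"] assms SMh_snd[OF assms] by auto
qed

lemma adeg_subadd:
  assumes "a \<in> SMh M" "b \<in> SMh M"
  shows "adeg M (fst a + fst b) \<le> adeg M (fst a) + adeg M (fst b)"
proof -
  have "(fst a, adeg M (fst a)) \<in> SMh M" using adeg_props(2)[of "fst a" "snd a"] assms by simp
  moreover have "(fst b, adeg M (fst b)) \<in> SMh M" using adeg_props(2)[of "fst b" "snd b"] assms by simp
  ultimately have "(fst a, adeg M (fst a)) + (fst b, adeg M (fst b)) \<in> SMh M" by (rule SMh_add)
  then show ?thesis using adeg_props(1) by fastforce
qed

lemma finite_lattice_pts:
  fixes M :: "(real^'n) set"
  assumes "bounded M"
  shows "finite (lattice_pts M)"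
proof -
  obtain B where B: "\<And>x. x \<in> M \<Longrightarrow> norm x \<le> B" using assms bounded_iff by blast
  define C where "C = \<lceil>B\<rceil>"
  have "lattice_pts M \<subseteq> vec_lambda ` (PiE UNIV (\<lambda>_. {-C..C}))"
  proof
    fix z assume z: "z \<in> lattice_pts M"
    have "\<And>i. \<bar>z $ i\<bar> \<le> C"
    proof -
      fix i
      have "norm (\<chi> i. real_of_int (z $ i)) \<le> B" using z B unfolding lattice_pts_def by auto
      moreover have "\<bar>(\<chi> i. real_of_int (z $ i)) $ i\<bar> \<le> norm (\<chi> i. real_of_int (z $ i))"
        by (rule component_le_norm_cart)
      ultimately have "\<bar>real_of_int (z $ i)\<bar> \<le> B" by simp
      then show "\<bar>z $ i\<bar> \<le> C" unfolding C_def by linarith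
    qed
    then have "\<And>i. -C \<le> z $ i \<and> z $ i \<le> C" by (simp add: abs_le_iff) (metis minus_le_iff)
    then have "(\<lambda>i. z $ i) \<in> PiE UNIV (\<lambda>_. {-C..C})" by (simp add: PiE_iff)
    then show "z \<in> vec_lambda ` (PiE UNIV (\<lambda>_. {-C..C}))"
      by (intro image_eqI[of _ _ "\<lambda>i. z $ i"]) simp_all
  qed
  moreover have "finite (PiE (UNIV::'n set) (\<lambda>_. {-C..C}))" by (intro finite_PiE) auto
  ultimately show ?thesis by (meson finite_imageI finite_subset)
qed

lemma SMh_cases: "x \<in> SMh M \<Longrightarrow> x = 0 \<or> (\<exists>a s. a \<in> Gh M \<and> s \<in> SMh M \<and> x = a + s)"
  unfolding SMh_def by (erule semigroup_gen.cases) blast+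

lemma finite_SMh_le:
  assumes "finite (lattice_pts M)"
  shows "finite {x \<in> SMh M. snd x \<le> int D}"
proof (induction D)
  case 0
  have "{x \<in> SMh M. snd x \<le> int 0} \<subseteq> {0}"
  proof
    fix x assume x: "x \<in> {x \<in> SMh M. snd x \<le> int 0}"
    then have "x \<in> SMh M" "snd x \<le> 0" by auto
    from SMh_cases[OF this(1)] show "x \<in> {0}"
    proof
      assume "\<exists>a s. a \<in> Gh M \<and> s \<in> SMh M \<and> x = a + s"
      then obtain a s where "a \<in> Gh M" "s \<in> SMh M" "x = a + s" by blast
      then have "snd x = 1 + snd s" by auto
      with SMh_snd[OF \<open>s \<in> SMh M\<close>] \<open>snd x \<le> 0\<close> show ?thesis by simp
    qed simp
  qed
  then show ?case by (rule finite_subset) simp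
next
  case (Suc D)
  have "{x \<in> SMh M. snd x \<le> int (Suc D)} \<subseteq> insert 0 ((\<lambda>(a, s). a + s) ` (Gh M \<times> {x \<in> SMh M. snd x \<le> int D}))"
  proof
    fix x assume x: "x \<in> {x \<in> SMh M. snd x \<le> int (Suc D)}"
    then have "x \<in> SMh M" "snd x \<le> int (Suc D)" by auto
    from SMh_cases[OF this(1)] show "x \<in> insert 0 ((\<lambda>(a, s). a + s) ` (Gh M \<times> {x \<in> SMh M. snd x \<le> int D}))"
    proof
      assume "\<exists>a s. a \<in> Gh M \<and> s \<in> SMh M \<and> x = a + s"
      then obtain a s where as: "a \<in> Gh M" "s \<in> SMh M" "x = a + s" by blast
      then have "snd x = 1 + snd s" by auto
      with \<open>snd x \<le> int (Suc D)\<close> have "snd s \<le> int D" by simp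
      with as show ?thesis by force
    qed simp
  qed
  moreover have "finite (insert 0 ((\<lambda>(a, s). a + s) ` (Gh M \<times> {x \<in> SMh M. snd x \<le> int D})))"
    using Suc assms by auto
  ultimately show ?case by (rule finite_subset)
qed

lemma finite_SMh_le':
  assumes "finite (lattice_pts M)"
  shows "finite {x \<in> SMh M. snd x \<le> e}"
proof -
  have "{x \<in> SMh M. snd x \<le> e} \<subseteq> {x \<in> SMh M. snd x \<le> int (nat e)}" by auto
  then show ?thesis using finite_SMh_le[OF assms, of "nat e"] by (rule finite_subset)
qed

lemma SMh_mset: "x \<in> SMh M \<Longrightarrow> \<exists>m. set_mset m \<subseteq> Gh M \<and> sum_mset m = x"
  unfolding SMh_def
proof (induction x rule: semigroup_gen.induct)
  case zero then show ?case by (intro exI[of _ "{#}"]) simp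
next
  case (gen_add a s)
  then obtain m where "set_mset m \<subseteq> Gh M" "sum_mset m = s" by blast
  with gen_add show ?case by (intro exI[of _ "add_mset a m"]) auto
qed

lemma mset_SMh: "set_mset m \<subseteq> Gh M \<Longrightarrow> sum_mset m \<in> SMh M"
proof (induction m)
  case empty then show ?case by (simp add: SMh_def semigroup_gen.zero)
next
  case (add x m)
  then show ?case unfolding SMh_def by (auto intro: semigroup_gen.gen_add)
qed

lemma gl_irrefl:
  assumes mo: "monomial_order_on (SM M) lessM" and a: "a \<in> SMh M"
  shows "\<not> gsparse_less M lessM a a"
  using mo SMh_fst[OF a] unfolding monomial_order_on_def gsparse_less_def sparse_less_def by auto

lemma mo_trans: "monomial_order_on S lt \<Longrightarrow> s\<in>S \<Longrightarrow> r\<in>S \<Longrightarrow> t\<in>S \<Longrightarrow> lt s r \<Longrightarrow> lt r t \<Longrightarrow> lt s t"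
  unfolding monomial_order_on_def by metis
lemma mo_total: "monomial_order_on S lt \<Longrightarrow> s\<in>S \<Longrightarrow> r\<in>S \<Longrightarrow> s \<noteq> r \<Longrightarrow> lt s r \<or> lt r s"
  unfolding monomial_order_on_def by metis
lemma mo_mono: "monomial_order_on S lt \<Longrightarrow> s\<in>S \<Longrightarrow> r\<in>S \<Longrightarrow> t\<in>S \<Longrightarrow> lt s r \<Longrightarrow> lt (s + t) (r + t)"
  unfolding monomial_order_on_def by metis

lemma gl_trans:
  assumes mo: "monomial_order_on (SM M) lessM" and "a \<in> SMh M" "b \<in> SMh M" "c \<in> SMh M"
    and "gsparse_less M lessM a b" "gsparse_less M lessM b c"
  shows "gsparse_less M lessM a c"
proof -
  have "lessM (fst a) (fst b) \<Longrightarrow> lessM (fst b) (fst c) \<Longrightarrow> lessM (fst a) (fst c)"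
    using mo_trans[OF mo SMh_fst[OF assms(2)] SMh_fst[OF assms(3)] SMh_fst[OF assms(4)]] .
  then show ?thesis
    using assms(5,6)
    unfolding gsparse_less_def sparse_less_def by (smt (verit))
qed

lemma gl_total:
  assumes mo: "monomial_order_on (SM M) lessM" and "a \<in> SMh M" "b \<in> SMh M" "a \<noteq> b"
  shows "gsparse_less M lessM a b \<or> gsparse_less M lessM b a"
proof -
  have "fst a \<noteq> fst b \<or> snd a \<noteq> snd b" using assms(4) by (metis prod_eq_iff)
  moreover have "fst a \<noteq> fst b \<Longrightarrow> lessM (fst a) (fst b) \<or> lessM (fst b) (fst a)"
    using mo_total[OF mo SMh_fst[OF assms(2)] SMh_fst[OF assms(3)]] .
  ultimately show ?thesis
    unfolding gsparse_less_def sparse_less_def by (smt (verit))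
qed

lemma gl_mono:
  assumes mo: "monomial_order_on (SM M) lessM"
    and m: "m \<in> SMh M" and x: "x \<in> SMh M" and t: "t \<in> SMh M"
    and lt: "gsparse_less M lessM m x"
    and add: "adeg M (fst x) + adeg M (fst t) = adeg M (fst x + fst t)"
  shows "gsparse_less M lessM (m + t) (x + t)"
proof -
  have sub: "adeg M (fst m + fst t) \<le> adeg M (fst m) + adeg M (fst t)"
    by (rule adeg_subadd[OF m t])
  have "lessM (fst m) (fst x) \<Longrightarrow> lessM (fst m + fst t) (fst x + fst t)"
    using mo_mono[OF mo SMh_fst[OF m] SMh_fst[OF x] SMh_fst[OF t]] .
  then show ?thesis
    using lt sub add
    unfolding gsparse_less_def sparse_less_def fst_add snd_add by (smt (verit))
qed

lemma gl_max:
  assumes mo: "monomial_order_on (SM M) lessM"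
  shows "finite K \<Longrightarrow> K \<noteq> {} \<Longrightarrow> K \<subseteq> SMh M \<Longrightarrow> \<exists>m\<in>K. \<forall>m'\<in>K. m' \<noteq> m \<longrightarrow> gsparse_less M lessM m' m"
proof (induction K rule: finite_ne_induct)
  case (singleton x) then show ?case by auto
next
  case (insert x F)
  then obtain m where m: "m \<in> F" "\<forall>m'\<in>F. m' \<noteq> m \<longrightarrow> gsparse_less M lessM m' m" by auto
  have xS: "x \<in> SMh M" and FS: "F \<subseteq> SMh M" using insert by auto
  have "x \<noteq> m" using m insert by auto
  then consider "gsparse_less M lessM x m" | "gsparse_less M lessM m x"
    using gl_total[OF mo xS] FS m by blast
  then show ?case
  proof cases
    case 1 then show ?thesis using m by auto
  next
    case 2
    have "\<forall>m'\<in>insert x F. m' \<noteq> x \<longrightarrow> gsparse_less M lessM m' x"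
      using m 2 gl_trans[OF mo _ _ xS] FS by (metis (no_types, lifting) insert_iff subsetD)
    then show ?thesis by blast
  qed
qed

lemma LM_props:
  assumes mo: "monomial_order_on (SM M) lessM"
    and f: "f \<noteq> 0" "Poly_Mapping.keys f \<subseteq> SMh M"
  shows "LM (gsparse_less M lessM) f \<in> Poly_Mapping.keys f"
    "\<And>m'. m' \<in> Poly_Mapping.keys f \<Longrightarrow> m' \<noteq> LM (gsparse_less M lessM) f \<Longrightarrow> gsparse_less M lessM m' (LM (gsparse_less M lessM) f)"
proof -
  let ?P = "\<lambda>m. m \<in> Poly_Mapping.keys f \<and> (\<forall>m'\<in>Poly_Mapping.keys f. m' \<noteq> m \<longrightarrow> gsparse_less M lessM m' m)"
  obtain m where m: "?P m" using gl_max[OF mo finite_keys[of f]] f by auto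
  have "\<exists>!m. ?P m"
  proof (rule ex1I[of _ m])
    show "?P m" by (rule m)
    fix y assume y: "?P y"
    show "y = m"
    proof (rule ccontr)
      assume "y \<noteq> m"
      then have "gsparse_less M lessM y m" "gsparse_less M lessM m y" using m y by auto
      moreover have "m \<in> SMh M" "y \<in> SMh M" using m y f by auto
      ultimately show False using gl_trans[OF mo] gl_irrefl[OF mo] by blast
    qed
  qed
  then have "?P (LM (gsparse_less M lessM) f)" unfolding LM_def by (rule theI')
  then show "LM (gsparse_less M lessM) f \<in> Poly_Mapping.keys f"
    "\<And>m'. m' \<in> Poly_Mapping.keys f \<Longrightarrow> m' \<noteq> LM (gsparse_less M lessM) f \<Longrightarrow> gsparse_less M lessM m' (LM (gsparse_less M lessM) f)"
    by auto
qed

lemma dickson: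
  fixes P :: "'b set"
  shows "finite P \<Longrightarrow> \<exists>F\<subseteq>A. finite F \<and> (\<forall>a\<in>A. \<exists>f\<in>F. \<forall>i\<in>P. f i \<le> (a i :: nat))"
proof (induction P arbitrary: A rule: finite_psubset_induct)
  case (psubset P)
  show ?case
  proof (cases "A = {}")
    case True then show ?thesis by auto
  next
    case False
    then obtain a0 where a0: "a0 \<in> A" by blast
    define Q where "Q = (\<lambda>i v F. F \<subseteq> {a\<in>A. a i = v} \<and> finite F \<and> (\<forall>a\<in>{a\<in>A. a i = v}. \<exists>f\<in>F. \<forall>j\<in>P - {i}. f j \<le> (a j::nat)))"
    have ex: "\<exists>F. Q i v F" if "i \<in> P" for i v
    proof -
      from that have "P - {i} \<subset> P" by auto
      from psubset.IH[OF this, of "{a\<in>A. a i = v}"] show ?thesis unfolding Q_def by blast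
    qed
    define Fs where "Fs = (\<lambda>i v. SOME F. Q i v F)"
    have Fs: "Fs i v \<subseteq> {a\<in>A. a i = v} \<and> finite (Fs i v) \<and> (\<forall>a\<in>{a\<in>A. a i = v}. \<exists>f\<in>Fs i v. \<forall>j\<in>P - {i}. f j \<le> a j)" if "i \<in> P" for i v
      using someI_ex[OF ex[OF that, of v]] unfolding Fs_def Q_def by simp
    have Fs_sub: "Fs i v \<subseteq> A" if "i \<in> P" for i v using Fs[OF that, of v] by blast
    have Fs_fin: "finite (Fs i v)" if "i \<in> P" for i v using Fs[OF that, of v] by blast
    define F where "F = insert a0 (\<Union>i\<in>P. \<Union>v\<in>{..<a0 i}. Fs i v)"
    have "F \<subseteq> A" unfolding F_def using a0 Fs_sub by blast
    moreover have "finite F" unfolding F_def using Fs_fin psubset.hyps by auto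
    moreover have "\<forall>a\<in>A. \<exists>f\<in>F. \<forall>i\<in>P. f i \<le> a i"
    proof
      fix a assume a: "a \<in> A"
      show "\<exists>f\<in>F. \<forall>i\<in>P. f i \<le> a i"
      proof (cases "\<forall>i\<in>P. a0 i \<le> a i")
        case True then show ?thesis unfolding F_def by blast
      next
        case False
        then obtain i where i: "i \<in> P" "a i < a0 i" by auto
        then obtain f where f: "f \<in> Fs i (a i)" "\<forall>j\<in>P - {i}. f j \<le> a j" using Fs[OF i(1), of "a i"] a by blast
        have "f i = a i" using Fs[OF i(1), of "a i"] f by blast
        then have "\<forall>j\<in>P. f j \<le> a j" using f by (metis Diff_iff empty_iff insert_iff order_refl)
        moreover have "f \<in> F" unfolding F_def using i f by blast
        ultimately show ?thesis by blast
      qed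
    qed
    ultimately show ?thesis by blast
  qed
qed

lemma key_sdvd:
  fixes M :: "(real^'n) set"
  assumes M0: "0 \<in> M" and x: "x \<in> SMh M" and y: "y \<in> SMh M"
    and mx: "set_mset mx \<subseteq> Gh M" "sum_mset mx = (fst x, adeg M (fst x))"
    and my: "set_mset my \<subseteq> Gh M" "sum_mset my = (fst y, adeg M (fst y))"
    and sub: "mx \<subseteq># my"
    and ex: "snd x - adeg M (fst x) \<le> snd y - adeg M (fst y)"
  shows "sdvd M x y"
proof -
  define d where "d = my - mx"
  have myd: "my = mx + d" unfolding d_def using sub by (simp add: subset_mset.add_diff_inverse)
  have "set_mset d \<subseteq> Gh M" unfolding d_def using my(1) by (meson in_diffD subset_iff)
  then have sdS: "sum_mset d \<in> SMh M" by (rule mset_SMh)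
  have "sum_mset my = sum_mset mx + sum_mset d" using myd by simp
  then have "sum_mset d = sum_mset my - sum_mset mx" by simp
  then have sd: "sum_mset d = (fst y - fst x, adeg M (fst y) - adeg M (fst x))"
    unfolding mx(2) my(2) by simp
  define e where "e = (snd y - snd x) - (adeg M (fst y) - adeg M (fst x))"
  have e0: "e \<ge> 0" unfolding e_def using ex by simp
  define t where "t = sum_mset d + (0, e)"
  have tS: "t \<in> SMh M" unfolding t_def by (rule SMh_add[OF sdS SMh_zero_deg'[OF M0 e0]])
  have xt: "x + t = y" unfolding t_def sd e_def by (simp add: prod_eq_iff)
  have ft: "fst t = fst y - fst x" unfolding t_def sd by simp
  have le1: "adeg M (fst y - fst x) \<le> adeg M (fst y) - adeg M (fst x)"
    using adeg_props(1)[of "fst y - fst x" "adeg M (fst y) - adeg M (fst x)" M] sdS sd by simp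
  have xa: "(fst x, adeg M (fst x)) \<in> SMh M" using adeg_props(2)[of "fst x" "snd x" M] x by simp
  have le2: "adeg M (fst x + (fst y - fst x)) \<le> adeg M (fst x) + adeg M (fst y - fst x)"
    using adeg_subadd[OF xa sdS] sd by simp
  have "sdeg_mon M x + sdeg_mon M t = sdeg_mon M y"
    unfolding sdeg_mon_def ft using le1 le2 by simp
  then show ?thesis unfolding sdvd_def using tS xt by blast
qed

theorem mainTheorem4:
  fixes M :: "(real^'n) set"
    and lessM :: "int^'n \<Rightarrow> int^'n \<Rightarrow> bool"
    and I :: "((int^'n) \<times> int \<Rightarrow>\<^sub>0 'k::field_char_0) set"
  assumes "polytope M"
    and "0 \<in> M"
    and "pointed_semigroup (SM M)"
    and "pointed_semigroup (SMh M)"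
    and "monomial_order_on (SM M) lessM"
    and "homogeneous_ideal_in (salg (SMh M)) I"
  shows "\<exists>G. finite G \<and> sparse_GB M lessM I G"
proof -
  let ?lt = "gsparse_less M lessM"
  let ?R = "salg (SMh M) :: ((int^'n) \<times> int \<Rightarrow>\<^sub>0 'k) set"
  have mo: "monomial_order_on (SM M) lessM" by fact
  have M0: "0 \<in> M" by fact
  have finP: "finite (lattice_pts M)"
    using finite_lattice_pts polytope_imp_bounded assms(1) by blast
  have Iid: "is_ideal_in ?R I" using assms(6) unfolding homogeneous_ideal_in_def by blast
  have IR: "I \<subseteq> ?R" using Iid unfolding is_ideal_in_def by blast
  have keysI: "Poly_Mapping.keys f \<subseteq> SMh M" if "f \<in> I" for f
    using IR that unfolding salg_def by auto
  define L where "L = {LM ?lt f | f. f \<in> I \<and> f \<noteq> 0}"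
  have LS: "L \<subseteq> SMh M" unfolding L_def using LM_props(1)[OF mo] keysI by blast
  define mrep where "mrep x = (SOME m. set_mset m \<subseteq> Gh M \<and> sum_mset m = (fst x, adeg M (fst x)))" for x :: "(int^'n) \<times> int"
  have mrep: "set_mset (mrep x) \<subseteq> Gh M \<and> sum_mset (mrep x) = (fst x, adeg M (fst x))"
    if "x \<in> SMh M" for x
  proof -
    have "(fst x, adeg M (fst x)) \<in> SMh M" using adeg_props(2)[of "fst x" "snd x" M] that by simp
    from SMh_mset[OF this] show ?thesis unfolding mrep_def by (rule someI_ex)
  qed
  define \<phi> where "\<phi> x = case_option (nat (snd x - adeg M (fst x))) (\<lambda>g. count (mrep x) g)" for x :: "(int^'n) \<times> int"
  define Pidx where "Pidx = insert None (Some ` Gh M)"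
  have finPidx: "finite Pidx" unfolding Pidx_def using finP by simp
  have key: "sdvd M x y" if x: "x \<in> SMh M" and y: "y \<in> SMh M" and le: "\<forall>i\<in>Pidx. \<phi> x i \<le> \<phi> y i" for x y
  proof -
    have sub: "mrep x \<subseteq># mrep y"
      unfolding subseteq_mset_def
    proof
      fix a
      show "count (mrep x) a \<le> count (mrep y) a"
      proof (cases "a \<in> Gh M")
        case True
        then have "Some a \<in> Pidx" unfolding Pidx_def by blast
        then show ?thesis using le unfolding \<phi>_def by force
      next
        case False
        then have "a \<notin> set_mset (mrep x)" using mrep[OF x] by blast
        then show ?thesis by (simp add: not_in_iff)
      qed
    qed
    have "None \<in> Pidx" unfolding Pidx_def by blast
    then have "nat (snd x - adeg M (fst x)) \<le> nat (snd y - adeg M (fst y))" using le unfolding \<phi>_def by force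
    moreover have "adeg M (fst x) \<le> snd x" using adeg_props(1)[of "fst x" "snd x" M] x by simp
    moreover have "adeg M (fst y) \<le> snd y" using adeg_props(1)[of "fst y" "snd y" M] y by simp
    ultimately have ex: "snd x - adeg M (fst x) \<le> snd y - adeg M (fst y)" by linarith
    show ?thesis using key_sdvd[OF M0 x y conjunct1[OF mrep[OF x]] conjunct2[OF mrep[OF x]]
        conjunct1[OF mrep[OF y]] conjunct2[OF mrep[OF y]] sub ex] .
  qed
  obtain F' where F': "F' \<subseteq> \<phi> ` L" "finite F'" "\<forall>a\<in>\<phi> ` L. \<exists>f\<in>F'. \<forall>i\<in>Pidx. f i \<le> a i"
    using dickson[OF finPidx, of "\<phi> ` L"] by blast
  define F where "F = inv_into L \<phi> ` F'"
  have FL: "F \<subseteq> L" unfolding F_def using F'(1) by (meson image_subsetI inv_into_into subsetD)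
  have finF: "finite F" unfolding F_def using F'(2) by simp
  have Fcov: "\<exists>x\<in>F. sdvd M x y" if "y \<in> L" for y
  proof -
    have "\<phi> y \<in> \<phi> ` L" using that by (rule imageI)
    from bspec[OF F'(3) this] obtain f where f: "f \<in> F'" "\<forall>i\<in>Pidx. f i \<le> \<phi> y i" by blast
    define x where "x = inv_into L \<phi> f"
    have xF: "x \<in> F" unfolding x_def F_def using f(1) by (rule imageI)
    have "f \<in> \<phi> ` L" using f(1) F'(1) by (rule subsetD[rotated])
    then have phx: "\<phi> x = f" unfolding x_def by (rule f_inv_into_f)
    have "x \<in> L" using FL xF by (rule subsetD)
    have le: "\<forall>i\<in>Pidx. \<phi> x i \<le> \<phi> y i" unfolding phx by (rule f(2))
    have xS: "x \<in> SMh M" using \<open>x \<in> L\<close> LS by (rule rev_subsetD)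
    have yS: "y \<in> SMh M" using that LS by (rule rev_subsetD)
    have "sdvd M x y" by (rule key[OF xS yS le])
    then show ?thesis using xF by (rule bexI)
  qed
  define gx where "gx x = (SOME g. g \<in> I \<and> g \<noteq> 0 \<and> LM ?lt g = x)" for x
  have gx: "gx x \<in> I \<and> gx x \<noteq> 0 \<and> LM ?lt (gx x) = x" if "x \<in> L" for x
  proof -
    have "\<exists>g. g \<in> I \<and> g \<noteq> 0 \<and> LM ?lt g = x" using that unfolding L_def by blast
    then show ?thesis unfolding gx_def by (rule someI_ex)
  qed
  define G where "G = gx ` F"
  have finG: "finite G" unfolding G_def using finF by simp
  have GI: "G \<subseteq> I"
  proof
    fix g assume "g \<in> G"
    then obtain x where x: "x \<in> F" "g = gx x" unfolding G_def by (rule imageE)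
    then have "x \<in> L" using FL by blast
    then show "g \<in> I" using gx[of x] x(2) by simp
  qed
  have LMprop: "\<forall>f\<in>I. f \<noteq> 0 \<longrightarrow> (\<exists>g\<in>G. g \<noteq> 0 \<and> sdvd M (LM ?lt g) (LM ?lt f))"
  proof (intro ballI impI)
    fix f assume "f \<in> I" "f \<noteq> 0"
    then have "LM ?lt f \<in> L" unfolding L_def by blast
    then obtain x where x: "x \<in> F" "sdvd M x (LM ?lt f)" using Fcov by blast
    then have "x \<in> L" using FL by blast
    then have gxx: "gx x \<noteq> 0" "LM ?lt (gx x) = x" using gx[of x] by simp_all
    have "gx x \<in> G" unfolding G_def using x(1) by (rule imageI)
    then show "\<exists>g\<in>G. g \<noteq> 0 \<and> sdvd M (LM ?lt g) (LM ?lt f)"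
      using gxx x(2) by (intro bexI[of _ "gx x"]) simp_all
  qed
  have gen: "ideal_gen_in ?R G = I"
  proof
    show "ideal_gen_in ?R G \<subseteq> I" unfolding ideal_gen_in_def using Iid GI by blast
  next
    show "I \<subseteq> ideal_gen_in ?R G" unfolding ideal_gen_in_def
    proof (intro subsetI InterI)
      fix f J assume fI: "f \<in> I" and J: "J \<in> {J. is_ideal_in ?R J \<and> G \<subseteq> J}"
      then have Jid: "is_ideal_in ?R J" and GJ: "G \<subseteq> J" by auto
      have J0: "0 \<in> J" and Jadd: "\<And>a b. a \<in> J \<Longrightarrow> b \<in> J \<Longrightarrow> a + b \<in> J"
        and Jmul: "\<And>h a. h \<in> ?R \<Longrightarrow> a \<in> J \<Longrightarrow> h * a \<in> J"
        using Jid unfolding is_ideal_in_def by auto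
      have Iadd: "\<And>a b. a \<in> I \<Longrightarrow> b \<in> I \<Longrightarrow> a + b \<in> I"
        and Imul: "\<And>h a. h \<in> ?R \<Longrightarrow> a \<in> I \<Longrightarrow> h * a \<in> I"
        using Iid unfolding is_ideal_in_def by auto
      have finlt: "finite {z \<in> SMh M. ?lt z b}" for b
      proof -
        have "{z \<in> SMh M. ?lt z b} \<subseteq> {z \<in> SMh M. snd z \<le> snd b}"
          unfolding gsparse_less_def by auto
        then show ?thesis using finite_SMh_le'[OF finP] by (rule finite_subset)
      qed
      have red: "card {z \<in> SMh M. ?lt z (LM ?lt f)} = n \<Longrightarrow> f \<in> I \<Longrightarrow> f \<in> J" for n f
      proof (induction n arbitrary: f rule: less_induct)
        case (less n f)
        show ?case
        proof (cases "f = 0")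
          case True then show ?thesis using J0 by simp
        next
          case False
          define lm where "lm = LM ?lt f"
          have fk: "Poly_Mapping.keys f \<subseteq> SMh M" using keysI less.prems(2) .
          have lmk: "lm \<in> Poly_Mapping.keys f" unfolding lm_def using LM_props(1)[OF mo False fk] .
          have lmS: "lm \<in> SMh M" using lmk fk by blast
          have lmL: "lm \<in> L" unfolding L_def lm_def using False less.prems(2) by blast
          obtain x where xF: "x \<in> F" and xd: "sdvd M x lm" using Fcov[OF lmL] by blast
          then obtain t where tS: "t \<in> SMh M" and xt: "x + t = lm"
            and dg: "sdeg_mon M x + sdeg_mon M t = sdeg_mon M lm"
            unfolding sdvd_def by blast
          have xL: "x \<in> L" using xF FL by blast
          have xS: "x \<in> SMh M" using xL LS by blast
          define g where "g = gx x"
          have gI: "g \<in> I" and g0: "g \<noteq> 0" and lmg: "LM ?lt g = x" using gx[OF xL] unfolding g_def by auto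
          have gJ: "g \<in> J" using GJ xF unfolding G_def g_def by blast
          have gk: "Poly_Mapping.keys g \<subseteq> SMh M" using keysI gI .
          have xk: "x \<in> Poly_Mapping.keys g" using LM_props(1)[OF mo g0 gk] lmg by simp
          define c where "c = Poly_Mapping.lookup f lm / Poly_Mapping.lookup g x"
          have gx0: "Poly_Mapping.lookup g x \<noteq> 0" using xk by (simp add: in_keys_iff)
          define h where "h = Poly_Mapping.single t (- c) * g"
          define f' where "f' = f + h"
          have sR: "Poly_Mapping.single t a \<in> ?R" for a
            unfolding salg_def using tS by auto
          have hI: "h \<in> I" unfolding h_def using Imul[OF sR gI] .
          have f'I: "f' \<in> I" unfolding f'_def using Iadd[OF less.prems(2) hI] .
          have cgJ: "Poly_Mapping.single t c * g \<in> J" using Jmul[OF sR gJ] .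
          have feq: "f = f' + Poly_Mapping.single t c * g"
            unfolding f'_def h_def by (simp add: single_uminus algebra_simps)
          have f'J: "f' \<in> J"
          proof (cases "f' = 0")
            case True then show ?thesis using J0 by simp
          next
            case f'0: False
            have f'k: "Poly_Mapping.keys f' \<subseteq> SMh M" using keysI f'I .
            define k where "k = LM ?lt f'"
            have kk: "k \<in> Poly_Mapping.keys f'" unfolding k_def using LM_props(1)[OF mo f'0 f'k] .
            have kS: "k \<in> SMh M" using kk f'k by blast
            have lmtx: "lm = t + x" using xt by (simp only: add.commute)
            have "Poly_Mapping.lookup h lm = - c * Poly_Mapping.lookup g x"
              unfolding h_def lmtx by (rule lookup_single_mult)
            then have "Poly_Mapping.lookup f' lm = 0"
              unfolding f'_def c_def using gx0 by (simp add: lookup_add)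
            then have klm: "k \<noteq> lm" using kk by (auto simp: in_keys_iff)
            have "k \<in> Poly_Mapping.keys f \<union> Poly_Mapping.keys h"
              using kk keys_add[of f h] unfolding f'_def by blast
            then have klt: "?lt k lm"
            proof
              assume "k \<in> Poly_Mapping.keys f"
              then show ?thesis using LM_props(2)[OF mo False fk] klm unfolding lm_def by blast
            next
              assume "k \<in> Poly_Mapping.keys h"
              then obtain m where mk: "m \<in> Poly_Mapping.keys g" and km: "k = t + m"
                using keys_single_mult[of t "-c" g] unfolding h_def by blast
              have "m \<noteq> x" using km klm lmtx by blast
              then have "?lt m x" using LM_props(2)[OF mo g0 gk mk] lmg by simp
              moreover have "adeg M (fst x) + adeg M (fst t) = adeg M (fst x + fst t)"
                using dg xt unfolding sdeg_mon_def by (metis fst_add)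
              ultimately have "?lt (m + t) (x + t)"
                using gl_mono[OF mo _ xS tS] mk gk by blast
              moreover have "m + t = k" using km by (simp only: add.commute)
              ultimately show ?thesis using xt by simp
            qed
            have "{z \<in> SMh M. ?lt z k} \<subset> {z \<in> SMh M. ?lt z lm}"
            proof
              show "{z \<in> SMh M. ?lt z k} \<subseteq> {z \<in> SMh M. ?lt z lm}"
                using gl_trans[OF mo _ kS lmS] klt by blast
              show "{z \<in> SMh M. ?lt z k} \<noteq> {z \<in> SMh M. ?lt z lm}"
                using kS klt gl_irrefl[OF mo kS] by blast
            qed
            then have "card {z \<in> SMh M. ?lt z k} < n"
              using psubset_card_mono[OF finlt] less.prems(1) unfolding lm_def by blast
            then show ?thesis using less.IH f'I unfolding k_def by blast
          qed
          show ?thesis using feq Jadd[OF f'J cgJ] by simp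
        qed
      qed
      show "f \<in> J" using red[OF refl fI] .
    qed
  qed
  show ?thesis
    unfolding sparse_GB_def using finG GI gen LMprop by blast
qed

end
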